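(* Let $2\le n\le l$ be integers and let $L_l=\{a_1<\dots<a_l\}$ be the linearly ordered semilattice of $l$ elements. Let $Eq(n)$ be the set of equations in the variables $X=\{x_1,\dots,x_n\}$, where an equation $t(X)=s(X)$ is identified with the ordered pair $(\mathrm{Var}(t),\mathrm{Var}(s))$ of nonempty subsets of $X$ with $\mathrm{Var}(t)\cup\mathrm{Var}(s)=X$ (so $|Eq(n)|=3^n-2$). For each equation let $\mathrm{Irr}$ denote the number of irreducible components of its solution set in $L_l^n$. Then the average of $\mathrm{Irr}$ over $Eq(n)$ is $$\overline{\mathrm{Irr}}(n)=\frac{4\,n!\,3^{n-2}}{3^n-2},$$ in particular $\overline{\mathrm{Irr}}(n)\sim \frac{4}{9}n!$ as $n\to\infty$; this value does not depend on $l$.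
   Context: $L_l$ has multiplication $a_ia_j=a_{\min(i,j)}$. A term is a commutative word in $x_1,\dots,x_n$; $\mathrm{Var}(t)$ is the set of variables occurring in $t$; the solution set of $t(X)=s(X)$ depends only on $\mathrm{Var}(t)$ and $\mathrm{Var}(s)$. Equations are ordered pairs, so $t=s$ and $s=t$ are counted as different equations. $P\in L_l^n$ is a solution if $t(P)=s(P)$. For a system $S$, $V(S)$ is its set of common solutions; $Y\subseteq L_l^n$ is algebraic if $Y=V(S)$ for some system $S$; an algebraic set is irreducible if it is not a proper finite union of other algebraic sets. Every algebraic set is uniquely (up to order) a finite union $Y_1\cup\dots\cup Y_m$ of irreducible algebraic sets with $Y_i\not\subseteq Y_j$ for $i\ne j$; these are its irreducible components. *)

theory Defs
  imports Main Complex_Main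
begin

text \<open>The semilattice L_l is modelled by the carrier {1..l} of nat with meet = min
  (a_i a_j = a_(min i j)).  Variables x_1..x_n are indices 0..n-1; a point of L_l^n is a
  list of length n with entries in {1..l}.  A term is determined (for solution sets) by its
  nonempty variable set T, and its value at P is the product = Min of the coordinates in T.\<close>

definition pts :: "nat \<Rightarrow> nat \<Rightarrow> nat list set" where
  "pts l n = {P. length P = n \<and> set P \<subseteq> {1..l}}"

definition tval :: "nat list \<Rightarrow> nat set \<Rightarrow> nat" where
  "tval P T = Min ((\<lambda>i. P ! i) ` T)"

definition alleqs :: "nat \<Rightarrow> (nat set \<times> nat set) set" where
  "alleqs n = {(T, S). T \<noteq> {} \<and> S \<noteq> {} \<and> T \<subseteq> {..<n} \<and> S \<subseteq> {..<n}}"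

definition Vsys :: "nat \<Rightarrow> nat \<Rightarrow> (nat set \<times> nat set) set \<Rightarrow> nat list set" where
  "Vsys l n Sys = {P \<in> pts l n. \<forall>(T, S) \<in> Sys. tval P T = tval P S}"

definition algebraic :: "nat \<Rightarrow> nat \<Rightarrow> nat list set \<Rightarrow> bool" where
  "algebraic l n Y \<longleftrightarrow> (\<exists>Sys \<subseteq> alleqs n. Y = Vsys l n Sys)"

definition irreducible_alg :: "nat \<Rightarrow> nat \<Rightarrow> nat list set \<Rightarrow> bool" where
  "irreducible_alg l n Y \<longleftrightarrow> algebraic l n Y \<and>
     (\<forall>F. finite F \<and> (\<forall>Z\<in>F. algebraic l n Z) \<and> Y = \<Union>F \<longrightarrow> Y \<in> F)"

definition irr_components :: "nat \<Rightarrow> nat \<Rightarrow> nat list set \<Rightarrow> nat list set set" where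
  "irr_components l n Y = (THE C. finite C \<and> (\<forall>Z\<in>C. irreducible_alg l n Z) \<and> \<Union>C = Y \<and>
      (\<forall>Z1\<in>C. \<forall>Z2\<in>C. Z1 \<noteq> Z2 \<longrightarrow> \<not> Z1 \<subseteq> Z2))"

definition Irr :: "nat \<Rightarrow> nat \<Rightarrow> nat list set \<Rightarrow> nat" where
  "Irr l n Y = card (irr_components l n Y)"

definition Eqn :: "nat \<Rightarrow> (nat set \<times> nat set) set" where
  "Eqn n = {(T, S). (T, S) \<in> alleqs n \<and> T \<union> S = {..<n}}"

end

theory Submission
  imports Defs "HOL-Combinatorics.Permutations" "HOL-Library.FuncSet"
begin


definition ch :: "nat \<Rightarrow> nat \<Rightarrow> (nat \<Rightarrow> nat) \<Rightarrow> nat list set" where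
  "ch l n p = {P \<in> pts l n. \<forall>i<n. \<forall>j<n. p i \<le> p j \<longrightarrow> P!i \<le> P!j}"

definition chE :: "nat \<Rightarrow> nat \<Rightarrow> (nat \<Rightarrow> nat) \<Rightarrow> nat list set" where
  "chE l n p = {P \<in> ch l n p. \<forall>i<n. \<forall>j<n. p i \<le> 1 \<longrightarrow> p j \<le> 1 \<longrightarrow> P!i = P!j}"

definition gen :: "nat \<Rightarrow> (nat \<Rightarrow> nat) \<Rightarrow> nat list" where
  "gen n p = map (\<lambda>i. p i + 1) [0..<n]"

definition genE :: "nat \<Rightarrow> (nat \<Rightarrow> nat) \<Rightarrow> nat list" where
  "genE n p = map (\<lambda>i. max (p i) 1) [0..<n]"

lemma tval_at:
  assumes "finite T" "t \<in> T" "\<forall>x\<in>T. P!t \<le> P!x"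
  shows "tval P T = P!t"
  unfolding tval_def using assms by (intro Min_eqI) auto

lemma tval_single: "tval P {i} = P!i"
  by (simp add: tval_def)

lemma tval_pair: "tval P {i,j} = min (P!i) (P!j)"
  by (simp add: tval_def)

lemma ball_pair: "\<forall>(T,S)\<in>Sys. f T S \<Longrightarrow> (a,b) \<in> Sys \<Longrightarrow> f a b"
  by auto

lemma ch_alg: "algebraic l n (ch l n p)"
proof -
  let ?Sys = "{({i},{i,j}) | i j. i<n \<and> j<n \<and> p i \<le> p j}"
  have "?Sys \<subseteq> alleqs n" by (auto simp: alleqs_def)
  moreover have "(\<forall>(T,S)\<in>?Sys. tval P T = tval P S) \<longleftrightarrow> (\<forall>i<n. \<forall>j<n. p i \<le> p j \<longrightarrow> P!i \<le> P!j)" for P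
  proof
    assume H: "\<forall>(T,S)\<in>?Sys. tval P T = tval P S"
    show "\<forall>i<n. \<forall>j<n. p i \<le> p j \<longrightarrow> P!i \<le> P!j"
    proof (intro allI impI)
      fix i j assume "i < n" "j < n" "p i \<le> p j"
      then have "({i},{i,j}) \<in> ?Sys" by blast
      then have "tval P {i} = tval P {i,j}" by (rule ball_pair[OF H])
      then show "P!i \<le> P!j" by (simp add: tval_single tval_pair min_def split: if_splits)
    qed
  next
    assume H: "\<forall>i<n. \<forall>j<n. p i \<le> p j \<longrightarrow> P!i \<le> P!j"
    show "\<forall>(T,S)\<in>?Sys. tval P T = tval P S"
    proof clarify
      fix i j assume "i < n" "j < n" "p i \<le> p j"
      then show "tval P {i} = tval P {i,j}" using H by (simp add: tval_single tval_pair min_def)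
    qed
  qed
  note key = this
  have "ch l n p = Vsys l n ?Sys"
    unfolding ch_def Vsys_def key by simp
  ultimately show ?thesis unfolding algebraic_def by blast
qed

lemma chE_alg: "algebraic l n (chE l n p)"
proof -
  let ?Sys = "{({i},{i,j}) | i j. i<n \<and> j<n \<and> p i \<le> p j} \<union>
     {({i},{j}) | i j. i<n \<and> j<n \<and> p i \<le> 1 \<and> p j \<le> 1}"
  have "?Sys \<subseteq> alleqs n" by (auto simp: alleqs_def)
  moreover have "(\<forall>(T,S)\<in>?Sys. tval P T = tval P S) \<longleftrightarrow> (\<forall>i<n. \<forall>j<n. p i \<le> p j \<longrightarrow> P!i \<le> P!j)
     \<and> (\<forall>i<n. \<forall>j<n. p i \<le> 1 \<longrightarrow> p j \<le> 1 \<longrightarrow> P!i = P!j)" for P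
  proof
    assume H: "\<forall>(T,S)\<in>?Sys. tval P T = tval P S"
    show "(\<forall>i<n. \<forall>j<n. p i \<le> p j \<longrightarrow> P!i \<le> P!j)
     \<and> (\<forall>i<n. \<forall>j<n. p i \<le> 1 \<longrightarrow> p j \<le> 1 \<longrightarrow> P!i = P!j)"
    proof (intro allI impI conjI)
      fix i j assume "i < n" "j < n" "p i \<le> p j"
      then have "({i},{i,j}) \<in> ?Sys" by blast
      then have "tval P {i} = tval P {i,j}" by (rule ball_pair[OF H])
      then show "P!i \<le> P!j" by (simp add: tval_single tval_pair min_def split: if_splits)
    next
      fix i j assume "i < n" "j < n" "p i \<le> 1" "p j \<le> 1"
      then have "({i},{j}) \<in> ?Sys" by blast
      then have "tval P {i} = tval P {j}" by (rule ball_pair[OF H])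
      then show "P!i = P!j" by (simp add: tval_single)
    qed
  next
    assume H: "(\<forall>i<n. \<forall>j<n. p i \<le> p j \<longrightarrow> P!i \<le> P!j)
     \<and> (\<forall>i<n. \<forall>j<n. p i \<le> 1 \<longrightarrow> p j \<le> 1 \<longrightarrow> P!i = P!j)"
    show "\<forall>(T,S)\<in>?Sys. tval P T = tval P S"
    proof clarify
      fix T S assume "(T,S) \<in> ?Sys"
      then show "tval P T = tval P S"
      proof
        assume "(T,S) \<in> {({i},{i,j}) | i j. i<n \<and> j<n \<and> p i \<le> p j}"
        then obtain i j where "T = {i}" "S = {i,j}" "i<n" "j<n" "p i \<le> p j" by blast
        moreover have "P!i \<le> P!j" using H calculation by blast
        ultimately show ?thesis by (simp add: tval_single tval_pair min_def)
      next
        assume "(T,S) \<in> {({i},{j}) | i j. i<n \<and> j<n \<and> p i \<le> 1 \<and> p j \<le> 1}"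
        then obtain i j where ij: "T = {i}" "S = {j}" "i<n" "j<n" "p i \<le> 1" "p j \<le> 1" by blast
        have "P!i = P!j" using conjunct2[OF H, rule_format, OF ij(3,4,5,6)] .
        then show ?thesis using ij(1,2) by (simp add: tval_single)
      qed
    qed
  qed
  note key = this
  have "chE l n p = Vsys l n ?Sys"
    unfolding chE_def ch_def Vsys_def key by blast
  ultimately show ?thesis unfolding algebraic_def by blast
qed

lemma alg_sub_pts: "algebraic l n Y \<Longrightarrow> Y \<subseteq> pts l n"
  by (auto simp: algebraic_def Vsys_def)

lemma irr_generic:
  assumes alg: "algebraic l n Y" and g: "g \<in> Y"
    and gen: "\<And>T S Q. (T,S) \<in> alleqs n \<Longrightarrow> tval g T = tval g S \<Longrightarrow> Q \<in> Y \<Longrightarrow> tval Q T = tval Q S"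
  shows "irreducible_alg l n Y"
  unfolding irreducible_alg_def
proof (intro conjI allI impI alg)
  fix F assume F: "finite F \<and> (\<forall>Z\<in>F. algebraic l n Z) \<and> Y = \<Union>F"
  then obtain Z where Z: "Z \<in> F" "g \<in> Z" using g by blast
  then obtain Sys where Sys: "Sys \<subseteq> alleqs n" "Z = Vsys l n Sys"
    using F unfolding algebraic_def by blast
  have "Z \<subseteq> Y" using F Z by blast
  moreover have "Y \<subseteq> Z"
  proof
    fix Q assume Q: "Q \<in> Y"
    have "Q \<in> pts l n" using Q alg_sub_pts[OF alg] by blast
    moreover have "\<forall>(T,S)\<in>Sys. tval Q T = tval Q S"
    proof (clarify)
      fix T S assume TS: "(T,S) \<in> Sys"
      then have "tval g T = tval g S" using Z Sys by (auto simp: Vsys_def)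
      then show "tval Q T = tval Q S" using gen TS Sys Q by blast
    qed
    ultimately show "Q \<in> Z" using Sys by (simp add: Vsys_def)
  qed
  ultimately show "Y \<in> F" using Z by auto
qed

lemma perm_lt: "p permutes {..<n} \<Longrightarrow> i < n \<Longrightarrow> p i < n"
  using permutes_in_image by fastforce

lemma gen_nth: "i < n \<Longrightarrow> gen n p ! i = p i + 1"
  by (simp add: gen_def)

lemma genE_nth: "i < n \<Longrightarrow> genE n p ! i = max (p i) 1"
  by (simp add: genE_def)

lemma gen_in:
  assumes p: "p permutes {..<n}" and nl: "n \<le> l"
  shows "gen n p \<in> ch l n p"
proof -
  have "x \<in> {1..l}" if "x \<in> set (gen n p)" for x
  proof -
    have "x \<in> (\<lambda>i. p i + 1) ` {0..<n}" using that by (simp add: gen_def)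
    then obtain i where "i < n" "x = p i + 1" by auto
    then show ?thesis using perm_lt[OF p \<open>i < n\<close>] nl by simp
  qed
  then have "gen n p \<in> pts l n" by (auto simp: pts_def gen_def)
  moreover have "\<forall>i<n. \<forall>j<n. p i \<le> p j \<longrightarrow> gen n p!i \<le> gen n p!j" by (simp add: gen_nth)
  ultimately show ?thesis unfolding ch_def by blast
qed

lemma genE_in:
  assumes p: "p permutes {..<n}" and nl: "n \<le> l"
  shows "genE n p \<in> chE l n p"
proof -
  have X: "x \<in> {1..l}" if "x \<in> set (genE n p)" for x
  proof -
    have "x \<in> (\<lambda>i. max (p i) 1) ` {0..<n}" using that by (simp add: genE_def)
    then obtain i where i: "i < n" "x = max (p i) 1" by auto
    have "p i < l" using perm_lt[OF p i(1)] nl by linarith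
    then show ?thesis using i(2) by (auto simp: max_def)
  qed
  have "set (genE n p) \<subseteq> {1..l}" using X by blast
  moreover have "length (genE n p) = n" by (simp add: genE_def)
  ultimately have "genE n p \<in> pts l n" unfolding pts_def by blast
  moreover have "\<forall>i<n. \<forall>j<n. p i \<le> p j \<longrightarrow> genE n p!i \<le> genE n p!j"
    by (auto simp: genE_nth le_max_iff_disj)
  moreover have "\<forall>i<n. \<forall>j<n. p i \<le> 1 \<longrightarrow> p j \<le> 1 \<longrightarrow> genE n p!i = genE n p!j"
    by (auto simp: genE_nth max_def)
  ultimately show ?thesis unfolding chE_def ch_def by blast
qed

lemma ex_argmin:
  assumes "T \<noteq> {}"
  obtains t where "t \<in> T" "\<And>x. x \<in> T \<Longrightarrow> (p::nat\<Rightarrow>nat) t \<le> p x"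
  using ex_has_least_nat[of "\<lambda>x. x \<in> T" _ p] assms by blast

lemma ch_irr:
  assumes p: "p permutes {..<n}" and nl: "n \<le> l"
  shows "irreducible_alg l n (ch l n p)"
proof (rule irr_generic[OF ch_alg gen_in[OF p nl]])
  fix T S Q assume TS: "(T,S) \<in> alleqs n" and eq: "tval (gen n p) T = tval (gen n p) S"
    and Q: "Q \<in> ch l n p"
  have fT: "finite T" "finite S" "T \<subseteq> {..<n}" "S \<subseteq> {..<n}" "T \<noteq> {}" "S \<noteq> {}"
    using TS by (auto simp: alleqs_def intro: finite_subset)
  obtain t where t: "t \<in> T" "\<And>x. x \<in> T \<Longrightarrow> p t \<le> p x" using ex_argmin[OF fT(5)] by metis
  obtain s where s: "s \<in> S" "\<And>x. x \<in> S \<Longrightarrow> p s \<le> p x" using ex_argmin[OF fT(6)] by metis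
  have "tval (gen n p) T = p t + 1"
    using tval_at[OF fT(1) t(1), of "gen n p"] t fT(3) by (auto simp: gen_nth subset_iff)
  moreover have "tval (gen n p) S = p s + 1"
    using tval_at[OF fT(2) s(1), of "gen n p"] s fT(4) by (auto simp: gen_nth subset_iff)
  ultimately have "p t = p s" using eq by simp
  then have ts: "t = s" using permutes_inj[OF p] by (simp add: inj_eq)
  have "tval Q T = Q!t"
    using tval_at[OF fT(1) t(1), of Q] t fT(3) Q by (auto simp: ch_def subset_iff)
  moreover have "tval Q S = Q!s"
    using tval_at[OF fT(2) s(1), of Q] s fT(4) Q by (auto simp: ch_def subset_iff)
  ultimately show "tval Q T = tval Q S" using ts by simp
qed

lemma chE_irr:
  assumes p: "p permutes {..<n}" and nl: "n \<le> l"
  shows "irreducible_alg l n (chE l n p)"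
proof (rule irr_generic[OF chE_alg genE_in[OF p nl]])
  fix T S Q assume TS: "(T,S) \<in> alleqs n" and eq: "tval (genE n p) T = tval (genE n p) S"
    and Q: "Q \<in> chE l n p"
  have fT: "finite T" "finite S" "T \<subseteq> {..<n}" "S \<subseteq> {..<n}" "T \<noteq> {}" "S \<noteq> {}"
    using TS by (auto simp: alleqs_def intro: finite_subset)
  obtain t where t: "t \<in> T" "\<And>x. x \<in> T \<Longrightarrow> p t \<le> p x" using ex_argmin[OF fT(5)] by metis
  obtain s where s: "s \<in> S" "\<And>x. x \<in> S \<Longrightarrow> p s \<le> p x" using ex_argmin[OF fT(6)] by metis
  have "\<forall>x\<in>T. genE n p ! t \<le> genE n p ! x"
  proof
    fix x assume x: "x \<in> T"
    then have "p t \<le> p x" "x < n" "t < n" using t fT(3) by auto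
    then show "genE n p ! t \<le> genE n p ! x" by (simp add: genE_nth max.mono)
  qed
  then have "tval (genE n p) T = max (p t) 1"
    using tval_at[OF fT(1) t(1), of "genE n p"] t fT(3) by (auto simp: genE_nth subset_iff)
  moreover have "\<forall>x\<in>S. genE n p ! s \<le> genE n p ! x"
  proof
    fix x assume x: "x \<in> S"
    then have "p s \<le> p x" "x < n" "s < n" using s fT(4) by auto
    then show "genE n p ! s \<le> genE n p ! x" by (simp add: genE_nth max.mono)
  qed
  then have "tval (genE n p) S = max (p s) 1"
    using tval_at[OF fT(2) s(1), of "genE n p"] s fT(4) by (auto simp: genE_nth subset_iff)
  ultimately have m: "max (p t) 1 = max (p s) 1" using eq by simp
  have Qc: "Q \<in> ch l n p" using Q unfolding chE_def by blast
  have "tval Q T = Q!t"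
    using tval_at[OF fT(1) t(1), of Q] t fT(3) Qc by (auto simp: ch_def subset_iff)
  moreover have "tval Q S = Q!s"
    using tval_at[OF fT(2) s(1), of Q] s fT(4) Qc by (auto simp: ch_def subset_iff)
  moreover have "Q!t = Q!s"
  proof (cases "p t = p s")
    case True
    then have "t = s" using permutes_inj[OF p] by (simp add: inj_eq)
    then show ?thesis by simp
  next
    case False
    then have "p t \<le> 1" "p s \<le> 1" using m by (auto simp: max_def split: if_splits)
    moreover have "t < n" "s < n" using t(1) s(1) fT(3,4) by auto
    ultimately show ?thesis using Q unfolding chE_def by blast
  qed
  ultimately show "tval Q T = tval Q S" by simp
qed



lemma perm_rank:
  fixes p :: "nat \<Rightarrow> nat"
  assumes p: "p permutes {..<n}" and i: "i < n"
  shows "card {j\<in>{..<n}. p j < p i} = p i"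
proof -
  have "p ` {j\<in>{..<n}. p j < p i} = {..<p i}"
  proof
    show "p ` {j\<in>{..<n}. p j < p i} \<subseteq> {..<p i}" by auto
    show "{..<p i} \<subseteq> p ` {j\<in>{..<n}. p j < p i}"
    proof
      fix v assume v: "v \<in> {..<p i}"
      then have "v \<in> {..<n}" using perm_lt[OF p i] by auto
      then have "v \<in> p ` {..<n}" using permutes_image[OF p] by simp
      then obtain j where "j < n" "v = p j" by auto
      then show "v \<in> p ` {j\<in>{..<n}. p j < p i}" using v by auto
    qed
  qed
  moreover have "inj_on p {j\<in>{..<n}. p j < p i}" using permutes_inj[OF p] by (auto intro: inj_on_subset)
  ultimately show ?thesis using card_image by fastforce
qed

lemma perm_eq:
  fixes p q :: "nat \<Rightarrow> nat"
  assumes p: "p permutes {..<n}" and q: "q permutes {..<n}"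
    and ord: "\<And>x y. x < n \<Longrightarrow> y < n \<Longrightarrow> q x \<le> q y \<Longrightarrow> p x \<le> p y"
  shows "p = q"
proof -
  have le: "p i \<le> q i" if i: "i \<in> {..<n}" for i
  proof -
    have "{j\<in>{..<n}. p j < p i} \<subseteq> {j\<in>{..<n}. q j < q i}"
    proof (rule subsetI)
      fix j assume j: "j \<in> {j\<in>{..<n}. p j < p i}"
      have "q j < q i"
      proof (rule ccontr)
        assume "\<not> q j < q i"
        then have "q i \<le> q j" by (simp add: not_less)
        then have "p i \<le> p j" using ord j i by simp
        then show False using j by simp
      qed
      then show "j \<in> {j\<in>{..<n}. q j < q i}" using j by simp
    qed
    then have "card {j\<in>{..<n}. p j < p i} \<le> card {j\<in>{..<n}. q j < q i}"
      by (intro card_mono) auto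
    then show ?thesis using perm_rank[OF p] perm_rank[OF q] i by simp
  qed
  have "sum p {..<n} = sum (\<lambda>x. x) {..<n}"
    using sum.reindex_bij_betw[OF permutes_imp_bij[OF p], of "\<lambda>x. x"] by simp
  moreover have "sum q {..<n} = sum (\<lambda>x. x) {..<n}"
    using sum.reindex_bij_betw[OF permutes_imp_bij[OF q], of "\<lambda>x. x"] by simp
  ultimately have eq: "sum p {..<n} = sum q {..<n}" by simp
  show ?thesis
  proof
    fix x show "p x = q x"
    proof (cases "x < n")
      case True
      then show ?thesis using sum_mono_inv[OF eq le] by auto
    next
      case False
      then show ?thesis using permutes_not_in[OF p] permutes_not_in[OF q] by auto
    qed
  qed
qed

lemma perm_inj: "p permutes S \<Longrightarrow> p a = p b \<longleftrightarrow> a = b"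
  using permutes_inj by (metis injD)

lemma ch_sub:
  assumes p: "p permutes {..<n}" and q: "q permutes {..<n}" and nl: "n \<le> l"
    and sub: "ch l n p \<subseteq> ch l n q"
  shows "p = q"
proof (rule perm_eq[OF p q])
  fix x y assume "x < n" "y < n" "q x \<le> q y"
  moreover have "gen n p \<in> ch l n q" using gen_in[OF p nl] sub by blast
  ultimately have "gen n p ! x \<le> gen n p ! y" unfolding ch_def by blast
  then show "p x \<le> p y" using \<open>x < n\<close> \<open>y < n\<close> by (simp add: gen_nth)
qed

lemma ch_chE:
  assumes p: "p permutes {..<n}" and q: "q permutes {..<n}" and nl: "n \<le> l"
    and ij: "i < n" "j < n" "q i = 0" "q j = 1"
  shows "\<not> ch l n p \<subseteq> chE l n q"
proof
  assume sub: "ch l n p \<subseteq> chE l n q"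
  have "gen n p \<in> chE l n q" using gen_in[OF p nl] sub by blast
  moreover have "q i \<le> 1" "q j \<le> 1" using ij by auto
  ultimately have "gen n p ! i = gen n p ! j" using ij(1,2) unfolding chE_def by blast
  then have "p i = p j" using ij by (simp add: gen_nth)
  then have "i = j" using perm_inj[OF p] by blast
  then show False using ij by simp
qed


definition IA :: "nat \<Rightarrow> nat set \<Rightarrow> nat set \<Rightarrow> (nat \<Rightarrow> nat) set" where
  "IA n T S = {p. p permutes {..<n} \<and> (\<exists>k\<in>T\<inter>S. p k = 0)}"

definition IB :: "nat \<Rightarrow> nat set \<Rightarrow> nat set \<Rightarrow> (nat \<Rightarrow> nat) set" where
  "IB n T S = {p. p permutes {..<n} \<and> (\<exists>i\<in>T-S. \<exists>j\<in>S-T. p i = 0 \<and> p j = 1)}"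

definition Comp :: "nat \<Rightarrow> nat \<Rightarrow> nat set \<Rightarrow> nat set \<Rightarrow> nat list set set" where
  "Comp l n T S = ch l n ` IA n T S \<union> chE l n ` IB n T S"

lemma chE_ch:
  assumes p: "p \<in> IB n T S" and q: "q \<in> IA n T S" and nl: "n \<le> l" and TS: "T \<subseteq> {..<n}" "S \<subseteq> {..<n}"
  shows "\<not> chE l n p \<subseteq> ch l n q"
proof
  assume sub: "chE l n p \<subseteq> ch l n q"
  obtain i j where pp: "p permutes {..<n}" "i \<in> T-S" "j \<in> S-T" "p i = 0" "p j = 1"
    using p unfolding IB_def by blast
  obtain k where qq: "q permutes {..<n}" "k \<in> T\<inter>S" "q k = 0" using q unfolding IA_def by blast
  have kn: "k < n" "i < n" using qq pp TS by auto
  have "genE n p \<in> ch l n q" using genE_in[OF pp(1) nl] sub by blast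
  moreover have "q k \<le> q i" using qq by simp
  ultimately have "genE n p ! k \<le> genE n p ! i" using kn unfolding ch_def by blast
  then have "p k \<le> 1" using kn pp(4) by (simp add: genE_nth)
  moreover have "k \<noteq> i" "k \<noteq> j" using pp qq by auto
  then have "p k \<noteq> 0" "p k \<noteq> 1" using perm_inj[OF pp(1)] pp(4,5) by metis+
  ultimately show False by simp
qed

lemma chE_sub:
  assumes p: "p \<in> IB n T S" and q: "q \<in> IB n T S" and nl: "n \<le> l" and TS: "T \<subseteq> {..<n}" "S \<subseteq> {..<n}"
    and sub: "chE l n p \<subseteq> chE l n q"
  shows "p = q"
proof -
  obtain i j where pp: "p permutes {..<n}" "i \<in> T-S" "j \<in> S-T" "p i = 0" "p j = 1"
    using p unfolding IB_def by blast
  obtain i' j' where qq: "q permutes {..<n}" "i' \<in> T-S" "j' \<in> S-T" "q i' = 0" "q j' = 1"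
    using q unfolding IB_def by blast
  have n: "i < n" "j < n" "i' < n" "j' < n" using pp qq TS by auto
  have pinj: "\<And>a b. p a = p b \<longleftrightarrow> a = b" using perm_inj[OF pp(1)] by blast
  have qinj: "\<And>a b. q a = q b \<longleftrightarrow> a = b" using perm_inj[OF qq(1)] by blast
  have G: "genE n p \<in> chE l n q" using genE_in[OF pp(1) nl] sub by blast
  then have Gc: "genE n p \<in> ch l n q" unfolding chE_def by blast
  have "q i' \<le> 1" "q j' \<le> 1" using qq by auto
  then have "genE n p ! i' = genE n p ! j'" using G n unfolding chE_def by blast
  then have m: "max (p i') 1 = max (p j') 1" using n by (simp add: genE_nth)
  have "i' \<noteq> j'" using qq by auto
  then have "p i' \<noteq> p j'" using pinj by blast
  then have le1: "p i' \<le> 1" "p j' \<le> 1" using m by (auto simp: max_def split: if_splits)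
  have "i' = i"
  proof (rule ccontr)
    assume "i' \<noteq> i"
    then have "p i' \<noteq> 0" using pinj pp(4) by metis
    then have "p i' = 1" using le1 by simp
    then have "i' = j" using pinj pp(5) by metis
    then show False using pp qq by auto
  qed
  have "j' = j"
  proof (rule ccontr)
    assume "j' \<noteq> j"
    then have "p j' \<noteq> 1" using pinj pp(5) by metis
    then have "p j' = 0" using le1 by simp
    then have "j' = i" using pinj pp(4) by metis
    then show False using pp qq by auto
  qed
  show ?thesis
  proof (rule perm_eq[OF pp(1) qq(1)])
    fix x y assume xy: "x < n" "y < n" "q x \<le> q y"
    then have "genE n p ! x \<le> genE n p ! y" using Gc unfolding ch_def by blast
    then have mx: "max (p x) 1 \<le> max (p y) 1" using xy by (simp add: genE_nth)
    show "p x \<le> p y"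
    proof (rule ccontr)
      assume "\<not> p x \<le> p y"
      then have lt: "p y < p x" by simp
      then have "p x \<le> 1" using mx by (auto simp: max_def split: if_splits)
      then have "p x = 1" "p y = 0" using lt by auto
      then have "x = j" "y = i" using pinj pp(4,5) by metis+
      then have "q x = 1" "q y = 0" using qq \<open>i' = i\<close> \<open>j' = j\<close> by auto
      then show False using xy by simp
    qed
  qed
qed


lemma key_div: "(c::nat) < m \<Longrightarrow> (a * m + c) div m = a"
  by simp

lemma key_mod: "(c::nat) < m \<Longrightarrow> (a * m + c) mod m = c"
  by simp

lemma sort_perm:
  assumes Q: "Q \<in> pts l n" and i: "i < n" and j: "j < n"
    and minQ: "\<And>x. x < n \<Longrightarrow> Q!i \<le> Q!x" and ji: "Q!j = Q!i"
  obtains r where "r permutes {..<n}" "Q \<in> ch l n r" "r i = 0"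
    "i \<noteq> j \<Longrightarrow> r j = 1" "i \<noteq> j \<Longrightarrow> Q \<in> chE l n r"
proof -
  define c where "c x = (if x = i then 0 else if x = j then 1 else x + 2)" for x :: nat
  define key where "key x = Q!x * (n+2) + c x" for x
  define r where "r x = (if x < n then card {y\<in>{..<n}. key y < key x} else x)" for x
  have cl: "c x < n + 2" if "x < n" for x using that by (auto simp: c_def)
  have cinj: "c x = c y \<Longrightarrow> x = y" for x y by (auto simp: c_def split: if_splits)
  have kdiv: "key x div (n+2) = Q!x" if "x < n" for x
    unfolding key_def using key_div[OF cl[OF that]] .
  have kmod: "key x mod (n+2) = c x" if "x < n" for x
    unfolding key_def using key_mod[OF cl[OF that]] .
  have kmono: "Q!x \<le> Q!y" if "x < n" "y < n" "key x \<le> key y" for x y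
    using div_le_mono[OF that(3), of "n+2"] kdiv that by simp
  have kinj: "x = y" if "x < n" "y < n" "key x = key y" for x y
    using kmod[OF that(1)] kmod[OF that(2)] that(3) cinj by metis
  have rlt: "r x < r y" if "x < n" "y < n" "key x < key y" for x y
  proof -
    have "{z\<in>{..<n}. key z < key x} \<subset> {z\<in>{..<n}. key z < key y}"
      using that by auto
    then have "card {z\<in>{..<n}. key z < key x} < card {z\<in>{..<n}. key z < key y}"
      by (rule psubset_card_mono[rotated]) auto
    then show ?thesis using that by (simp add: r_def)
  qed
  have rn: "r x < n" if "x < n" for x
  proof -
    have "{z\<in>{..<n}. key z < key x} \<subset> {..<n}" using that by auto
    then have "card {z\<in>{..<n}. key z < key x} < card {..<n}"
      by (rule psubset_card_mono[rotated]) auto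
    then show ?thesis using that by (simp add: r_def)
  qed
  have rinj: "inj_on r {..<n}"
  proof (rule inj_onI)
    fix x y assume xy: "x \<in> {..<n}" "y \<in> {..<n}" "r x = r y"
    show "x = y"
    proof (rule ccontr)
      assume "x \<noteq> y"
      then have "key x \<noteq> key y" using kinj xy by auto
      then have "key x < key y \<or> key y < key x" by auto
      then show False using rlt xy by fastforce
    qed
  qed
  have rimg: "r ` {..<n} = {..<n}"
    using endo_inj_surj[of "{..<n}" r] rinj rn by auto
  have rperm: "r permutes {..<n}"
  proof (rule bij_imp_permutes)
    show "bij_betw r {..<n} {..<n}" using rinj rimg by (simp add: bij_betw_def)
    show "r x = x" if "x \<notin> {..<n}" for x using that by (simp add: r_def)
  qed
  have rkey: "key x \<le> key y" if "x < n" "y < n" "r x \<le> r y" for x y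
  proof (rule ccontr)
    assume "\<not> key x \<le> key y"
    then have "r y < r x" using rlt that by simp
    then show False using that by simp
  qed
  have chr: "Q \<in> ch l n r"
    unfolding ch_def using Q kmono rkey by blast
  have ri: "r i = 0"
  proof -
    have "{y\<in>{..<n}. key y < key i} = {}"
    proof -
      have "key i \<le> key y" if "y < n" for y
      proof -
        have "Q!i * (n+2) \<le> Q!y * (n+2)" using minQ[OF that] by (rule mult_le_mono1)
        moreover have "c i = 0" by (simp add: c_def)
        ultimately show ?thesis unfolding key_def by linarith
      qed
      then show ?thesis by (auto simp: not_less[symmetric])
    qed
    then show ?thesis using i by (simp add: r_def)
  qed
  have rj: "r j = 1" if ij: "i \<noteq> j"
  proof -
    have "{y\<in>{..<n}. key y < key j} = {i}"
    proof
      show "{i} \<subseteq> {y\<in>{..<n}. key y < key j}"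
        using i ij ji by (simp add: key_def c_def)
      show "{y\<in>{..<n}. key y < key j} \<subseteq> {i}"
      proof
        fix y assume y: "y \<in> {y\<in>{..<n}. key y < key j}"
        then have yn: "y < n" and ky: "key y < key j" by auto
        then have "Q!y \<le> Q!j" using kmono j by simp
        then have "Q!y = Q!i" using minQ[OF yn] ji by simp
        then have "c y < c j" using ky ji unfolding key_def by simp
        then have "c y = 0" using ij by (simp add: c_def)
        then have "y = i" by (auto simp: c_def split: if_splits)
        then show "y \<in> {i}" by simp
      qed
    qed
    then show ?thesis using j by (simp add: r_def)
  qed
  have chEr: "Q \<in> chE l n r" if ij: "i \<noteq> j"
  proof -
    have "Q!x = Q!y" if "x < n" "y < n" "r x \<le> 1" "r y \<le> 1" for x y
    proof -
      have "r x = r i \<or> r x = r j" "r y = r i \<or> r y = r j" using that ri rj[OF ij] by auto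
      then have "x = i \<or> x = j" "y = i \<or> y = j"
        using perm_inj[OF rperm] by blast+
      then show ?thesis using ji by auto
    qed
    then show ?thesis using chr unfolding chE_def by blast
  qed
  show ?thesis using that rperm chr ri rj chEr by blast
qed


lemma Vsys_Un: "Vsys l n (A \<union> B) = Vsys l n A \<inter> Vsys l n B"
  by (auto simp: Vsys_def)

lemma irr_alg: "irreducible_alg l n Z \<Longrightarrow> algebraic l n Z"
  unfolding irreducible_alg_def by (rule conjunct1)

lemma irr_prop: "irreducible_alg l n Z \<Longrightarrow> finite F \<Longrightarrow> (\<forall>W\<in>F. algebraic l n W) \<Longrightarrow> Z = \<Union>F \<Longrightarrow> Z \<in> F"
  unfolding irreducible_alg_def by (drule conjunct2, drule spec[of _ F], blast)

lemma irr_in_comp: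
  assumes Z': "irreducible_alg l n Z'" and C: "finite C" "\<forall>Z\<in>C. algebraic l n Z" and sub: "Z' \<subseteq> \<Union>C"
  shows "\<exists>Z\<in>C. Z' \<subseteq> Z"
proof -
  let ?F = "(\<lambda>Z. Z' \<inter> Z) ` C"
  have "\<forall>W\<in>?F. algebraic l n W"
  proof
    fix W assume "W \<in> ?F"
    then obtain Z where Z: "Z \<in> C" "W = Z' \<inter> Z" by blast
    obtain A where A: "A \<subseteq> alleqs n" "Z' = Vsys l n A" using irr_alg[OF Z'] unfolding algebraic_def by blast
    obtain B where B: "B \<subseteq> alleqs n" "Z = Vsys l n B" using C Z unfolding algebraic_def by blast
    have "W = Vsys l n (A \<union> B)" using Z A B Vsys_Un by simp
    then show "algebraic l n W" using A B unfolding algebraic_def by blast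
  qed
  moreover have "Z' = \<Union>?F" using sub by blast
  moreover have "finite ?F" using C by simp
  ultimately have "Z' \<in> ?F" using irr_prop[OF Z'] by blast
  then show ?thesis by blast
qed

definition good :: "nat \<Rightarrow> nat \<Rightarrow> nat list set \<Rightarrow> nat list set set \<Rightarrow> bool" where
  "good l n Y C \<longleftrightarrow> finite C \<and> (\<forall>Z\<in>C. irreducible_alg l n Z) \<and> \<Union>C = Y \<and>
      (\<forall>Z1\<in>C. \<forall>Z2\<in>C. Z1 \<noteq> Z2 \<longrightarrow> \<not> Z1 \<subseteq> Z2)"

lemma good_D:
  assumes "good l n Y C"
  shows "finite C" "\<And>Z. Z \<in> C \<Longrightarrow> irreducible_alg l n Z" "\<Union>C = Y"
    "\<And>Z1 Z2. Z1 \<in> C \<Longrightarrow> Z2 \<in> C \<Longrightarrow> Z1 \<subseteq> Z2 \<Longrightarrow> Z1 = Z2"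
proof -
  have g: "finite C" "\<forall>Z\<in>C. irreducible_alg l n Z" "\<Union>C = Y"
    "\<forall>Z1\<in>C. \<forall>Z2\<in>C. Z1 \<noteq> Z2 \<longrightarrow> \<not> Z1 \<subseteq> Z2"
    using assms[unfolded good_def, THEN conjunct1]
      assms[unfolded good_def, THEN conjunct2, THEN conjunct1]
      assms[unfolded good_def, THEN conjunct2, THEN conjunct2, THEN conjunct1]
      assms[unfolded good_def, THEN conjunct2, THEN conjunct2, THEN conjunct2] by auto
  show "finite C" "\<Union>C = Y" by (fact g(1), fact g(3))
  show "\<And>Z. Z \<in> C \<Longrightarrow> irreducible_alg l n Z" using g(2) by (rule bspec)
  show "\<And>Z1 Z2. Z1 \<in> C \<Longrightarrow> Z2 \<in> C \<Longrightarrow> Z1 \<subseteq> Z2 \<Longrightarrow> Z1 = Z2"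
    using g(4) by blast
qed

lemma good_sub:
  assumes G: "good l n Y C" and G': "good l n Y C'"
  shows "C' \<subseteq> C"
proof
  fix Z' assume Z': "Z' \<in> C'"
  have algC: "\<forall>Z\<in>C. algebraic l n Z" "\<forall>Z\<in>C'. algebraic l n Z"
    using irr_alg good_D(2)[OF G] good_D(2)[OF G'] by blast+
  have "Z' \<subseteq> \<Union>C" using good_D(3)[OF G] good_D(3)[OF G'] Z' by blast
  then obtain Z where Z: "Z \<in> C" "Z' \<subseteq> Z"
    using irr_in_comp[OF good_D(2)[OF G' Z'] good_D(1)[OF G] algC(1)] by blast
  have "Z \<subseteq> \<Union>C'" using good_D(3)[OF G] good_D(3)[OF G'] Z by blast
  then obtain Z'' where Z'': "Z'' \<in> C'" "Z \<subseteq> Z''"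
    using irr_in_comp[OF good_D(2)[OF G Z(1)] good_D(1)[OF G'] algC(2)] by blast
  have "Z' = Z''" using good_D(4)[OF G' Z' Z''(1)] Z Z'' by blast
  then have "Z' = Z" using Z Z'' by blast
  then show "Z' \<in> C" using Z by simp
qed

lemma irr_comp_eq:
  assumes "good l n Y C"
  shows "irr_components l n Y = C"
  unfolding irr_components_def
proof (rule the_equality)
  show "finite C \<and> (\<forall>Z\<in>C. irreducible_alg l n Z) \<and> \<Union>C = Y \<and>
      (\<forall>Z1\<in>C. \<forall>Z2\<in>C. Z1 \<noteq> Z2 \<longrightarrow> \<not> Z1 \<subseteq> Z2)" using assms unfolding good_def .
  fix C' assume "finite C' \<and> (\<forall>Z\<in>C'. irreducible_alg l n Z) \<and> \<Union>C' = Y \<and>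
      (\<forall>Z1\<in>C'. \<forall>Z2\<in>C'. Z1 \<noteq> Z2 \<longrightarrow> \<not> Z1 \<subseteq> Z2)"
  then have "good l n Y C'" unfolding good_def .
  then show "C' = C" using good_sub assms by blast
qed


lemma tval_min:
  assumes "T \<subseteq> {..<n}" "k \<in> T" "\<And>x. x < n \<Longrightarrow> Q!k \<le> Q!x"
  shows "tval Q T = Q!k"
  using assms by (intro tval_at) (auto intro: finite_subset)

lemma comp_union:
  assumes TS: "T \<subseteq> {..<n}" "S \<subseteq> {..<n}" "T \<noteq> {}" "S \<noteq> {}" "T \<union> S = {..<n}"
    and nl: "n \<le> l"
  shows "\<Union>(Comp l n T S) = Vsys l n {(T,S)}"
proof
  show "\<Union>(Comp l n T S) \<subseteq> Vsys l n {(T,S)}"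
  proof
    fix Q assume "Q \<in> \<Union>(Comp l n T S)"
    then obtain Z where Z: "Z \<in> Comp l n T S" "Q \<in> Z" by blast
    show "Q \<in> Vsys l n {(T,S)}"
    proof (cases "Z \<in> ch l n ` IA n T S")
      case True
      then obtain p k where p: "p permutes {..<n}" "k \<in> T \<inter> S" "p k = 0" "Z = ch l n p"
        unfolding IA_def by blast
      have Qc: "Q \<in> ch l n p" using Z p by simp
      have kn: "k < n" using p TS by auto
      have "Q!k \<le> Q!x" if "x < n" for x
      proof -
        have "p k \<le> p x" using p by simp
        then show ?thesis using Qc kn that unfolding ch_def by blast
      qed
      then have "tval Q T = Q!k" "tval Q S = Q!k" using tval_min TS p by auto
      moreover have "Q \<in> pts l n" using Qc unfolding ch_def by blast
      ultimately show ?thesis by (simp add: Vsys_def)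
    next
      case False
      then have "Z \<in> chE l n ` IB n T S" using Z unfolding Comp_def by blast
      then obtain p i j where p: "p permutes {..<n}" "i \<in> T - S" "j \<in> S - T" "p i = 0" "p j = 1"
        "Z = chE l n p"
        unfolding IB_def by blast
      have Qc: "Q \<in> chE l n p" using Z p by simp
      then have Qc': "Q \<in> ch l n p" unfolding chE_def by blast
      have kn: "i < n" "j < n" using p TS by auto
      have "p i \<le> 1" "p j \<le> 1" using p by auto
      then have ij: "Q!i = Q!j" using Qc kn unfolding chE_def by blast
      have mi: "Q!i \<le> Q!x" if "x < n" for x
      proof -
        have "p i \<le> p x" using p by simp
        then show ?thesis using Qc' kn that unfolding ch_def by blast
      qed
      then have "tval Q T = Q!i" using tval_min TS p by auto
      moreover have "tval Q S = Q!j" using tval_min[of S n j Q] TS p mi ij by auto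
      moreover have "Q \<in> pts l n" using Qc' unfolding ch_def by blast
      ultimately show ?thesis using ij by (simp add: Vsys_def)
    qed
  qed
next
  show "Vsys l n {(T,S)} \<subseteq> \<Union>(Comp l n T S)"
  proof
    fix Q assume Q: "Q \<in> Vsys l n {(T,S)}"
    then have Qp: "Q \<in> pts l n" and eq: "tval Q T = tval Q S" by (auto simp: Vsys_def)
    have fin: "finite T" "finite S" using TS by (auto intro: finite_subset)
    obtain t where t: "t \<in> T" "\<And>x. x \<in> T \<Longrightarrow> Q!t \<le> Q!x"
      using ex_argmin[OF TS(3), of "\<lambda>x. Q!x"] by metis
    obtain s where s: "s \<in> S" "\<And>x. x \<in> S \<Longrightarrow> Q!s \<le> Q!x"
      using ex_argmin[OF TS(4), of "\<lambda>x. Q!x"] by metis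
    have "tval Q T = Q!t" using tval_at[OF fin(1) t(1)] t(2) by blast
    moreover have "tval Q S = Q!s" using tval_at[OF fin(2) s(1)] s(2) by blast
    ultimately have ts: "Q!s = Q!t" using eq by simp
    have mint: "Q!t \<le> Q!x" if "x < n" for x
    proof -
      have "x \<in> T \<or> x \<in> S" using TS(5) that by auto
      then show ?thesis using t s ts by auto
    qed
    have tn: "t < n" "s < n" using t s TS by auto
    show "Q \<in> \<Union>(Comp l n T S)"
    proof (cases "t \<in> S")
      case True
      obtain r where r: "r permutes {..<n}" "Q \<in> ch l n r" "r t = 0"
        using sort_perm[OF Qp tn(1) tn(1) mint refl] by blast
      have "r \<in> IA n T S" unfolding IA_def using r True t(1) by blast
      then show ?thesis using r(2) unfolding Comp_def by blast
    next
      case tS: False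
      show ?thesis
      proof (cases "s \<in> T")
        case True
        have mins: "Q!s \<le> Q!x" if "x < n" for x using mint[OF that] ts by simp
        obtain r where r: "r permutes {..<n}" "Q \<in> ch l n r" "r s = 0"
          using sort_perm[OF Qp tn(2) tn(2) mins refl] by blast
        have "r \<in> IA n T S" unfolding IA_def using r True s(1) by blast
        then show ?thesis using r(2) unfolding Comp_def by blast
      next
        case False
        have "t \<noteq> s" using tS s(1) by auto
        then obtain r where r: "r permutes {..<n}" "r t = 0" "r s = 1" "Q \<in> chE l n r"
          using sort_perm[OF Qp tn(1) tn(2) mint ts] by metis
        have "r \<in> IB n T S" unfolding IB_def using r tS False t(1) s(1) by blast
        then show ?thesis using r(4) unfolding Comp_def by blast
      qed
    qed
  qed
qed


lemma fix_img:
  assumes "a \<in> X" "b \<in> X"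
  shows "{q. q permutes X \<and> q a = b} = (\<lambda>p. Transposition.transpose a b \<circ> p) ` {p. p permutes X - {a}}"
proof
  show "(\<lambda>p. Transposition.transpose a b \<circ> p) ` {p. p permutes X - {a}} \<subseteq> {q. q permutes X \<and> q a = b}"
  proof
    fix q assume "q \<in> (\<lambda>p. Transposition.transpose a b \<circ> p) ` {p. p permutes X - {a}}"
    then obtain p where p: "p permutes X - {a}" and qp: "q = Transposition.transpose a b \<circ> p" by blast
    have "p permutes X" using permutes_subset[OF p] by blast
    then have "q permutes X" unfolding qp by (rule permutes_compose[OF _ permutes_swap_id[OF assms]])
    moreover have "p a = a" using permutes_not_in[OF p] by simp
    ultimately show "q \<in> {q. q permutes X \<and> q a = b}" unfolding qp by simp
  qed
  show "{q. q permutes X \<and> q a = b} \<subseteq> (\<lambda>p. Transposition.transpose a b \<circ> p) ` {p. p permutes X - {a}}"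
  proof
    fix q assume "q \<in> {q. q permutes X \<and> q a = b}"
    then have q: "q permutes X" "q a = b" by auto
    define p where "p = Transposition.transpose a b \<circ> q"
    have pX: "p permutes X" unfolding p_def by (rule permutes_compose[OF q(1) permutes_swap_id[OF assms]])
    have pa: "p a = a" using q(2) by (simp add: p_def)
    have "p permutes X - {a}"
    proof (rule permutes_superset[OF pX])
      fix x assume "x \<in> X - (X - {a})"
      then have "x = a" by simp
      then show "p x = x" using pa by simp
    qed
    moreover have "q = Transposition.transpose a b \<circ> p" by (rule ext) (simp add: p_def)
    ultimately show "q \<in> (\<lambda>p. Transposition.transpose a b \<circ> p) ` {p. p permutes X - {a}}" by blast
  qed
qed

lemma inj_tcomp: "inj (\<lambda>p. Transposition.transpose a b \<circ> p)"
proof (rule injI)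
  fix p q assume "Transposition.transpose a b \<circ> p = Transposition.transpose a b \<circ> q"
  then have "\<And>x. Transposition.transpose a b (p x) = Transposition.transpose a b (q x)"
    by (metis comp_apply)
  then show "p = q" by (intro ext) (metis transpose_involutory)
qed

lemma card_fix1:
  assumes "finite X" "a \<in> X" "b \<in> X"
  shows "card {q. q permutes X \<and> q a = b} = fact (card X - 1)"
proof -
  have "card {q. q permutes X \<and> q a = b} = card {p. p permutes X - {a}}"
    unfolding fix_img[OF assms(2,3)] by (rule card_image) (rule inj_on_subset[OF inj_tcomp], simp)
  also have "\<dots> = fact (card (X - {a}))" using assms by (intro card_permutations) auto
  finally show ?thesis using assms by simp
qed

lemma card_fix2:
  assumes "finite X" "a \<in> X" "b \<in> X" "c \<in> X" "d \<in> X" "a \<noteq> c" "b \<noteq> d"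
  shows "card {q. q permutes X \<and> q a = b \<and> q c = d} = fact (card X - 2)"
proof -
  let ?t = "Transposition.transpose a b"
  have "{q. q permutes X \<and> q a = b \<and> q c = d} = {q \<in> {q. q permutes X \<and> q a = b}. q c = d}" by auto
  also have "\<dots> = {q \<in> (\<lambda>p. ?t \<circ> p) ` {p. p permutes X - {a}}. q c = d}"
    unfolding fix_img[OF assms(2,3)] ..
  also have "\<dots> = (\<lambda>p. ?t \<circ> p) ` {p. p permutes X - {a} \<and> p c = ?t d}"
  proof
    show "{q \<in> (\<lambda>p. ?t \<circ> p) ` {p. p permutes X - {a}}. q c = d} \<subseteq> (\<lambda>p. ?t \<circ> p) ` {p. p permutes X - {a} \<and> p c = ?t d}"
    proof
      fix q assume "q \<in> {q \<in> (\<lambda>p. ?t \<circ> p) ` {p. p permutes X - {a}}. q c = d}"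
      then obtain p where p: "p permutes X - {a}" "q = ?t \<circ> p" "q c = d" by blast
      then have "?t (p c) = d" by simp
      then have "p c = ?t d" by (metis transpose_involutory)
      then show "q \<in> (\<lambda>p. ?t \<circ> p) ` {p. p permutes X - {a} \<and> p c = ?t d}" using p by blast
    qed
    show "(\<lambda>p. ?t \<circ> p) ` {p. p permutes X - {a} \<and> p c = ?t d} \<subseteq> {q \<in> (\<lambda>p. ?t \<circ> p) ` {p. p permutes X - {a}}. q c = d}"
    proof
      fix q assume "q \<in> (\<lambda>p. ?t \<circ> p) ` {p. p permutes X - {a} \<and> p c = ?t d}"
      then obtain p where p: "p permutes X - {a}" "q = ?t \<circ> p" "p c = ?t d" by blast
      then have "q c = d" by simp
      then show "q \<in> {q \<in> (\<lambda>p. ?t \<circ> p) ` {p. p permutes X - {a}}. q c = d}" using p by blast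
    qed
  qed
  finally have eq: "{q. q permutes X \<and> q a = b \<and> q c = d} = (\<lambda>p. ?t \<circ> p) ` {p. p permutes X - {a} \<and> p c = ?t d}" .
  have td: "?t d \<in> X - {a}" using assms by (auto simp: transpose_def)
  have "card {q. q permutes X \<and> q a = b \<and> q c = d} = card {p. p permutes X - {a} \<and> p c = ?t d}"
    unfolding eq by (rule card_image) (rule inj_on_subset[OF inj_tcomp], simp)
  also have "\<dots> = fact (card (X - {a}) - 1)"
    by (rule card_fix1) (use assms td in auto)
  also have "card (X - {a}) - 1 = card X - 2" using assms by (simp add: card_Diff_singleton)
  finally show ?thesis .
qed


lemma finite_IA: "finite (IA n T S)"
  by (rule finite_subset[of _ "{p. p permutes {..<n}}"]) (auto simp: IA_def finite_permutations)

lemma finite_IB: "finite (IB n T S)"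
  by (rule finite_subset[of _ "{p. p permutes {..<n}}"]) (auto simp: IB_def finite_permutations)

lemma card_IA:
  assumes TS: "T \<subseteq> {..<n}" "S \<subseteq> {..<n}" and n: "1 \<le> n"
  shows "card (IA n T S) = card (T \<inter> S) * fact (n - 1)"
proof -
  let ?A = "\<lambda>k. {q. q permutes {..<n} \<and> q k = 0}"
  have eq: "IA n T S = (\<Union>k\<in>T\<inter>S. ?A k)" unfolding IA_def by blast
  have finI: "finite (T \<inter> S)" using TS by (auto intro: finite_subset)
  have "card (\<Union>k\<in>T\<inter>S. ?A k) = (\<Sum>k\<in>T\<inter>S. card (?A k))"
  proof (rule card_UN_disjoint[OF finI])
    show "\<forall>k\<in>T \<inter> S. finite (?A k)"
      by (auto intro: finite_subset[OF _ finite_permutations[of "{..<n}"]])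
    show "\<forall>i\<in>T \<inter> S. \<forall>j\<in>T \<inter> S. i \<noteq> j \<longrightarrow> ?A i \<inter> ?A j = {}"
      using perm_inj by fastforce
  qed
  also have "\<dots> = (\<Sum>k\<in>T\<inter>S. fact (n - 1))"
  proof (rule sum.cong[OF refl])
    fix k assume "k \<in> T \<inter> S"
    then have "k \<in> {..<n}" "0 \<in> {..<n}" using TS n by auto
    then show "card (?A k) = fact (n - 1)" using card_fix1[of "{..<n}" k 0] by simp
  qed
  also have "\<dots> = card (T \<inter> S) * fact (n - 1)" by simp
  finally show ?thesis using eq by simp
qed

lemma card_IB:
  assumes TS: "T \<subseteq> {..<n}" "S \<subseteq> {..<n}" and n: "2 \<le> n"
  shows "card (IB n T S) = card (T - S) * card (S - T) * fact (n - 2)"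
proof -
  let ?A = "\<lambda>(i,j). {q. q permutes {..<n} \<and> q i = 0 \<and> q j = 1}"
  have eq: "IB n T S = (\<Union>x\<in>(T-S)\<times>(S-T). ?A x)" unfolding IB_def by auto
  have finI: "finite ((T-S)\<times>(S-T))" using TS by (auto intro: finite_subset)
  have "card (\<Union>x\<in>(T-S)\<times>(S-T). ?A x) = (\<Sum>x\<in>(T-S)\<times>(S-T). card (?A x))"
  proof (rule card_UN_disjoint[OF finI])
    show "\<forall>x\<in>(T-S)\<times>(S-T). finite (?A x)"
      by (auto intro: finite_subset[OF _ finite_permutations[of "{..<n}"]])
    show "\<forall>x\<in>(T-S)\<times>(S-T). \<forall>y\<in>(T-S)\<times>(S-T). x \<noteq> y \<longrightarrow> ?A x \<inter> ?A y = {}"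
    proof (intro ballI impI)
      fix x y assume "x \<in> (T-S)\<times>(S-T)" "y \<in> (T-S)\<times>(S-T)" "x \<noteq> y"
      then obtain i j i' j' where "x = (i,j)" "y = (i',j')" "i \<noteq> i' \<or> j \<noteq> j'" by (cases x, cases y) auto
      then show "?A x \<inter> ?A y = {}" using perm_inj by fastforce
    qed
  qed
  also have "\<dots> = (\<Sum>x\<in>(T-S)\<times>(S-T). fact (n - 2))"
  proof (rule sum.cong[OF refl])
    fix x assume "x \<in> (T-S)\<times>(S-T)"
    then obtain i j where x: "x = (i,j)" "i \<in> T - S" "j \<in> S - T" by auto
    then have "i \<in> {..<n}" "j \<in> {..<n}" "0 \<in> {..<n}" "1 \<in> {..<n}" "i \<noteq> j" using TS n by auto
    then have "card {q. q permutes {..<n} \<and> q i = 0 \<and> q j = 1} = fact (n - 2)"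
      using card_fix2[of "{..<n}" i 0 j 1] by simp
    then show "card (?A x) = fact (n - 2)" using x by simp
  qed
  also have "\<dots> = card (T - S) * card (S - T) * fact (n - 2)" by (simp add: card_cartesian_product)
  finally show ?thesis using eq by simp
qed


lemma comp_Irr:
  assumes e: "(T,S) \<in> Eqn n" and n: "2 \<le> n" and nl: "n \<le> l"
  shows "Irr l n (Vsys l n {(T,S)}) = card (T \<inter> S) * fact (n - 1) + card (T - S) * card (S - T) * fact (n - 2)"
proof -
  have TS: "T \<subseteq> {..<n}" "S \<subseteq> {..<n}" "T \<noteq> {}" "S \<noteq> {}" "T \<union> S = {..<n}"
    using e by (auto simp: Eqn_def alleqs_def)
  have inA: "p permutes {..<n}" if "p \<in> IA n T S" for p using that unfolding IA_def by blast
  have inB: "p permutes {..<n}" if "p \<in> IB n T S" for p using that unfolding IB_def by blast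
  obtain ij where ij: "\<And>p. p \<in> IB n T S \<Longrightarrow> fst (ij p) < n \<and> snd (ij p) < n \<and> p (fst (ij p)) = 0 \<and> p (snd (ij p)) = 1"
  proof -
    have "\<forall>p\<in>IB n T S. \<exists>x. fst x < n \<and> snd x < n \<and> p (fst x) = 0 \<and> p (snd x) = 1"
    proof
      fix p assume "p \<in> IB n T S"
      then obtain i j where "i \<in> T - S" "j \<in> S - T" "p i = 0" "p j = 1" unfolding IB_def by blast
      then show "\<exists>x. fst x < n \<and> snd x < n \<and> p (fst x) = 0 \<and> p (snd x) = 1"
        using TS by (intro exI[of _ "(i,j)"]) auto
    qed
    then show ?thesis using that by metis
  qed
  have ac: "Z1 = Z2" if h: "Z1 \<in> Comp l n T S" "Z2 \<in> Comp l n T S" "Z1 \<subseteq> Z2" for Z1 Z2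
  proof (cases "Z1 \<in> ch l n ` IA n T S")
    case True
    then obtain p where p: "p \<in> IA n T S" "Z1 = ch l n p" by blast
    show ?thesis
    proof (cases "Z2 \<in> ch l n ` IA n T S")
      case True
      then obtain q where q: "q \<in> IA n T S" "Z2 = ch l n q" by blast
      then show ?thesis using ch_sub[OF inA[OF p(1)] inA[OF q(1)] nl] p h(3) by blast
    next
      case False
      then obtain q where q: "q \<in> IB n T S" "Z2 = chE l n q" using h(2) unfolding Comp_def by blast
      have "\<not> ch l n p \<subseteq> chE l n q"
        using ch_chE[OF inA[OF p(1)] inB[OF q(1)] nl] ij[OF q(1)] by blast
      then show ?thesis using p q h(3) by blast
    qed
  next
    case False
    then obtain p where p: "p \<in> IB n T S" "Z1 = chE l n p" using h(1) unfolding Comp_def by blast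
    show ?thesis
    proof (cases "Z2 \<in> ch l n ` IA n T S")
      case True
      then obtain q where q: "q \<in> IA n T S" "Z2 = ch l n q" by blast
      have "\<not> chE l n p \<subseteq> ch l n q" using chE_ch[OF p(1) q(1) nl TS(1,2)] .
      then show ?thesis using p q h(3) by blast
    next
      case False
      then obtain q where q: "q \<in> IB n T S" "Z2 = chE l n q" using h(2) unfolding Comp_def by blast
      then show ?thesis using chE_sub[OF p(1) q(1) nl TS(1,2)] p h(3) by blast
    qed
  qed
  have irr: "irreducible_alg l n Z" if "Z \<in> Comp l n T S" for Z
    using that ch_irr[OF inA nl] chE_irr[OF inB nl] unfolding Comp_def by blast
  have fin: "finite (Comp l n T S)" unfolding Comp_def using finite_IA finite_IB by blast
  have "good l n (Vsys l n {(T,S)}) (Comp l n T S)"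
    unfolding good_def using fin irr comp_union[OF TS nl] ac by blast
  then have "Irr l n (Vsys l n {(T,S)}) = card (Comp l n T S)"
    unfolding Irr_def by (simp add: irr_comp_eq)
  also have "card (Comp l n T S) = card (ch l n ` IA n T S) + card (chE l n ` IB n T S)"
    unfolding Comp_def
  proof (rule card_Un_disjoint)
    show "finite (ch l n ` IA n T S)" "finite (chE l n ` IB n T S)" using finite_IA finite_IB by auto
    show "ch l n ` IA n T S \<inter> chE l n ` IB n T S = {}"
    proof (rule ccontr)
      assume "ch l n ` IA n T S \<inter> chE l n ` IB n T S \<noteq> {}"
      then obtain p q where p: "p \<in> IA n T S" "q \<in> IB n T S" "ch l n p = chE l n q" by blast
      then show False using chE_ch[OF p(2) p(1) nl TS(1,2)] by blast
    qed
  qed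
  also have "card (ch l n ` IA n T S) = card (IA n T S)"
  proof (rule card_image, rule inj_onI)
    fix p q assume "p \<in> IA n T S" "q \<in> IA n T S" "ch l n p = ch l n q"
    then show "p = q" using ch_sub[OF inA inA nl] by blast
  qed
  also have "card (chE l n ` IB n T S) = card (IB n T S)"
  proof (rule card_image, rule inj_onI)
    fix p q assume "p \<in> IB n T S" "q \<in> IB n T S" "chE l n p = chE l n q"
    then show "p = q" using chE_sub[OF _ _ nl TS(1,2)] by blast
  qed
  finally show ?thesis using card_IA[OF TS(1,2)] card_IB[OF TS(1,2) n] n by simp
qed


definition AP :: "nat \<Rightarrow> (nat set \<times> nat set) set" where
  "AP n = {(T,S). T \<subseteq> {..<n} \<and> S \<subseteq> {..<n} \<and> T \<union> S = {..<n}}"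

definition DD :: "nat \<Rightarrow> (nat \<Rightarrow> nat) set" where
  "DD n = PiE {..<n} (\<lambda>_. {0,1,2})"

definition dec :: "nat \<Rightarrow> (nat \<Rightarrow> nat) \<Rightarrow> nat set \<times> nat set" where
  "dec n f = ({i\<in>{..<n}. f i \<noteq> 1}, {i\<in>{..<n}. f i \<noteq> 0})"

definition enc :: "nat \<Rightarrow> nat set \<times> nat set \<Rightarrow> (nat \<Rightarrow> nat)" where
  "enc n TS = restrict (\<lambda>i. if i \<in> fst TS \<inter> snd TS then 2 else if i \<in> fst TS then 0 else 1) {..<n}"

lemma bij_dec: "bij_betw (dec n) (DD n) (AP n)"
proof (rule bij_betw_byWitness[where f' = "enc n"])
  show "\<forall>f\<in>DD n. enc n (dec n f) = f"
  proof
    fix f assume f: "f \<in> DD n"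
    show "enc n (dec n f) = f"
    proof
      fix i show "enc n (dec n f) i = f i"
      proof (cases "i < n")
        case True
        then have fi: "f i \<in> {0,1,2}" using PiE_mem[OF f[unfolded DD_def]] by blast
        have "enc n (dec n f) i = (if f i \<noteq> 1 \<and> f i \<noteq> 0 then 2 else if f i \<noteq> 1 then 0 else 1)"
          using True by (simp add: enc_def dec_def)
        then show ?thesis using fi by auto
      next
        case False
        then show ?thesis using PiE_arb[OF f[unfolded DD_def]] by (simp add: enc_def)
      qed
    qed
  qed
  show "\<forall>TS\<in>AP n. dec n (enc n TS) = TS"
  proof
    fix TS assume "TS \<in> AP n"
    then obtain T S where TS: "TS = (T,S)" "T \<subseteq> {..<n}" "S \<subseteq> {..<n}" "T \<union> S = {..<n}"
      by (auto simp: AP_def)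
    have "{i\<in>{..<n}. enc n (T,S) i \<noteq> 1} = T" using TS by (auto simp: enc_def)
    moreover have "{i\<in>{..<n}. enc n (T,S) i \<noteq> 0} = S" using TS by (auto simp: enc_def)
    ultimately show "dec n (enc n TS) = TS" using TS by (simp add: dec_def)
  qed
  show "dec n ` DD n \<subseteq> AP n"
  proof
    fix x assume "x \<in> dec n ` DD n"
    then obtain f where f: "f \<in> DD n" "x = dec n f" by blast
    have "f i \<noteq> 1 \<or> f i \<noteq> 0" for i by auto
    then show "x \<in> AP n" using f by (auto simp: AP_def dec_def)
  qed
  show "enc n ` AP n \<subseteq> DD n"
  proof
    fix x assume "x \<in> enc n ` AP n"
    then obtain TS where x: "x = enc n TS" by blast
    have "\<forall>i\<in>{..<n}. x i \<in> {0,1,2}" unfolding x enc_def by simp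
    moreover have "x \<in> extensional {..<n}" unfolding x enc_def by (rule restrict_extensional)
    ultimately show "x \<in> DD n" unfolding DD_def PiE_iff by blast
  qed
qed

lemma card_DD: "card (DD n) = 3 ^ n"
  by (simp add: DD_def card_PiE numeral_3_eq_3)

lemma card_fixK:
  assumes K: "K \<subseteq> {..<n}" and g: "\<And>x. x \<in> K \<Longrightarrow> g x \<in> {0,1,2}"
  shows "card {f \<in> DD n. \<forall>x\<in>K. f x = g x} = 3 ^ (n - card K)"
proof -
  have "{f \<in> DD n. \<forall>x\<in>K. f x = g x} = PiE {..<n} (\<lambda>x. if x \<in> K then {g x} else {0,1,2})"
  proof (rule set_eqI)
    fix f
    show "f \<in> {f \<in> DD n. \<forall>x\<in>K. f x = g x} \<longleftrightarrow> f \<in> PiE {..<n} (\<lambda>x. if x \<in> K then {g x} else {0,1,2})"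
    proof
      assume "f \<in> {f \<in> DD n. \<forall>x\<in>K. f x = g x}"
      then have f: "f \<in> DD n" "\<forall>x\<in>K. f x = g x" by auto
      have "f x \<in> (if x \<in> K then {g x} else {0,1,2})" if "x \<in> {..<n}" for x
        using PiE_mem[OF f(1)[unfolded DD_def] that] f(2) by auto
      then show "f \<in> PiE {..<n} (\<lambda>x. if x \<in> K then {g x} else {0,1,2})"
        using f(1) unfolding DD_def PiE_iff by blast
    next
      assume f: "f \<in> PiE {..<n} (\<lambda>x. if x \<in> K then {g x} else {0,1,2})"
      have "f x \<in> {0,1,2}" if "x \<in> {..<n}" for x
      proof (cases "x \<in> K")
        case True
        then show ?thesis using PiE_mem[OF f that] g[OF True] by simp
      next
        case False
        then show ?thesis using PiE_mem[OF f that] by simp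
      qed
      moreover have "\<forall>x\<in>K. f x = g x"
      proof
        fix x assume x: "x \<in> K"
        then have "x \<in> {..<n}" using K by auto
        then show "f x = g x" using PiE_mem[OF f] x by fastforce
      qed
      ultimately show "f \<in> {f \<in> DD n. \<forall>x\<in>K. f x = g x}"
        using f unfolding DD_def PiE_iff by blast
    qed
  qed
  then have "card {f \<in> DD n. \<forall>x\<in>K. f x = g x} = (\<Prod>x\<in>{..<n}. if x \<in> K then 1 else 3)"
  proof -
    assume e: "{f \<in> DD n. \<forall>x\<in>K. f x = g x} = PiE {..<n} (\<lambda>x. if x \<in> K then {g x} else {0,1,2})"
    have "(\<Prod>x\<in>{..<n}. card (if x \<in> K then {g x} else {0::nat,1,2})) = (\<Prod>x\<in>{..<n}. if x \<in> K then 1 else 3)"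
      by (rule prod.cong) auto
    then show ?thesis unfolding e by (simp only: card_PiE finite_lessThan)
  qed
  also have "\<dots> = 3 ^ card ({..<n} - K)"
    by (simp add: prod.If_cases Diff_eq)
  also have "card ({..<n} - K) = n - card K"
    using K by (simp add: card_Diff_subset finite_subset)
  finally show ?thesis .
qed

lemma card_as_sum: "finite I \<Longrightarrow> card {i\<in>I. P i} = (\<Sum>i\<in>I. if P i then 1 else 0)"
  by (simp add: sum.If_cases Int_def)


lemma finite_DD: "finite (DD n)"
  by (simp add: DD_def finite_PiE)

lemma swap_count:
  "(\<Sum>f\<in>DD n. card {i\<in>{..<n}. P f i}) = (\<Sum>i\<in>{..<n}. card {f\<in>DD n. P f i})"
proof -
  have "(\<Sum>f\<in>DD n. card {i\<in>{..<n}. P f i}) = (\<Sum>f\<in>DD n. \<Sum>i\<in>{..<n}. if P f i then 1 else 0)"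
    by (rule sum.cong[OF refl]) (rule card_as_sum[OF finite_lessThan])
  also have "\<dots> = (\<Sum>i\<in>{..<n}. \<Sum>f\<in>DD n. if P f i then 1 else 0)" by (rule sum.swap)
  also have "\<dots> = (\<Sum>i\<in>{..<n}. card {f\<in>DD n. P f i})"
    by (rule sum.cong[OF refl]) (simp add: card_as_sum[OF finite_DD])
  finally show ?thesis .
qed

lemma sum_c2: "(\<Sum>f\<in>DD n. card {i\<in>{..<n}. f i = 2}) = n * 3 ^ (n - 1)"
proof -
  have "(\<Sum>f\<in>DD n. card {i\<in>{..<n}. f i = 2}) = (\<Sum>i\<in>{..<n}. card {f\<in>DD n. f i = 2})"
    by (rule swap_count)
  also have "\<dots> = (\<Sum>i\<in>{..<n}. 3 ^ (n - 1))"
  proof (rule sum.cong[OF refl])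
    fix i assume i: "i \<in> {..<n}"
    have "{f\<in>DD n. f i = 2} = {f\<in>DD n. \<forall>x\<in>{i}. f x = (\<lambda>_. 2) x}" by auto
    also have "card \<dots> = 3 ^ (n - card {i})" using i by (intro card_fixK) auto
    finally show "card {f\<in>DD n. f i = 2} = 3 ^ (n - 1)" by simp
  qed
  also have "\<dots> = n * 3 ^ (n - 1)" by simp
  finally show ?thesis .
qed

lemma sum_c01: "(\<Sum>f\<in>DD n. card {i\<in>{..<n}. f i = 0} * card {i\<in>{..<n}. f i = 1}) = n * ((n - 1) * 3 ^ (n - 2))"
proof -
  have "(\<Sum>f\<in>DD n. card {i\<in>{..<n}. f i = 0} * card {i\<in>{..<n}. f i = 1})
      = (\<Sum>f\<in>DD n. \<Sum>i\<in>{..<n}. \<Sum>j\<in>{..<n}. if f i = 0 \<and> f j = 1 then 1 else 0)"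
  proof (rule sum.cong[OF refl])
    fix f
    have "card {i\<in>{..<n}. f i = 0} * card {i\<in>{..<n}. f i = 1}
        = (\<Sum>i\<in>{..<n}. if f i = 0 then 1 else 0) * (\<Sum>j\<in>{..<n}. if f j = 1 then 1 else 0)"
      by (simp only: card_as_sum[OF finite_lessThan])
    also have "\<dots> = (\<Sum>i\<in>{..<n}. \<Sum>j\<in>{..<n}. (if f i = 0 then 1 else 0) * (if f j = 1 then 1 else 0))"
      by (rule sum_product)
    also have "\<dots> = (\<Sum>i\<in>{..<n}. \<Sum>j\<in>{..<n}. if f i = 0 \<and> f j = 1 then 1 else 0)"
      by (intro sum.cong refl) auto
    finally show "card {i\<in>{..<n}. f i = 0} * card {i\<in>{..<n}. f i = 1}
      = (\<Sum>i\<in>{..<n}. \<Sum>j\<in>{..<n}. if f i = 0 \<and> f j = 1 then 1 else 0)" .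
  qed
  also have "\<dots> = (\<Sum>i\<in>{..<n}. \<Sum>f\<in>DD n. \<Sum>j\<in>{..<n}. if f i = 0 \<and> f j = 1 then 1 else 0)"
    by (rule sum.swap)
  also have "\<dots> = (\<Sum>i\<in>{..<n}. \<Sum>j\<in>{..<n}. \<Sum>f\<in>DD n. if f i = 0 \<and> f j = 1 then 1 else 0)"
    by (intro sum.cong refl sum.swap)
  also have "\<dots> = (\<Sum>i\<in>{..<n}. \<Sum>j\<in>{..<n}. if j = i then 0 else 3 ^ (n - 2))"
  proof (intro sum.cong refl)
    fix i j assume i: "i \<in> {..<n}" and j: "j \<in> {..<n}"
    have e: "(\<Sum>f\<in>DD n. if f i = 0 \<and> f j = 1 then (1::nat) else 0) = card {f\<in>DD n. f i = 0 \<and> f j = 1}"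
      by (simp add: card_as_sum[OF finite_DD])
    show "(\<Sum>f\<in>DD n. if f i = 0 \<and> f j = 1 then (1::nat) else 0) = (if j = i then 0 else 3 ^ (n - 2))"
    proof (cases "j = i")
      case True
      have "(\<Sum>f\<in>DD n. if f i = 0 \<and> f j = 1 then (1::nat) else 0) = (\<Sum>f\<in>DD n. (0::nat))"
        by (rule sum.cong[OF refl]) (use True in auto)
      then show ?thesis using True by simp
    next
      case False
      have "{f\<in>DD n. f i = 0 \<and> f j = 1} = {f\<in>DD n. \<forall>x\<in>{i,j}. f x = (\<lambda>x. if x = i then 0 else 1) x}"
        using False by auto
      also have "card \<dots> = 3 ^ (n - card {i,j})" using i j by (intro card_fixK) auto
      finally show ?thesis using False e by simp
    qed
  qed
  also have "\<dots> = (\<Sum>i\<in>{..<n}. (n - 1) * 3 ^ (n - 2))"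
  proof (rule sum.cong[OF refl])
    fix i assume i: "i \<in> {..<n}"
    have "(\<Sum>j\<in>{..<n}. if j = i then 0 else 3 ^ (n - 2)) = (\<Sum>j\<in>{..<n} - {i}. (3::nat) ^ (n - 2))"
      by (rule sum.mono_neutral_cong_right) auto
    also have "\<dots> = (n - 1) * 3 ^ (n - 2)" using i by simp
    finally show "(\<Sum>j\<in>{..<n}. if j = i then 0 else 3 ^ (n - 2)) = (n - 1) * 3 ^ (n - 2)" .
  qed
  also have "\<dots> = n * ((n - 1) * 3 ^ (n - 2))" by simp
  finally show ?thesis .
qed


definition phi :: "nat \<Rightarrow> nat set \<times> nat set \<Rightarrow> nat" where
  "phi n TS = card (fst TS \<inter> snd TS) * fact (n - 1) + card (fst TS - snd TS) * card (snd TS - fst TS) * fact (n - 2)"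

lemma finite_AP: "finite (AP n)"
  using bij_betw_finite[OF bij_dec] finite_DD by blast

lemma card_AP: "card (AP n) = 3 ^ n"
  using bij_betw_same_card[OF bij_dec] card_DD by simp

lemma Eqn_AP: "Eqn n = AP n - {({}, {..<n}), ({..<n}, {})}"
  by (auto simp: Eqn_def alleqs_def AP_def)

lemma sum_Eqn_AP: "(\<Sum>e\<in>Eqn n. phi n e) = (\<Sum>e\<in>AP n. phi n e)"
proof (rule sum.mono_neutral_left[OF finite_AP])
  show "Eqn n \<subseteq> AP n" using Eqn_AP by blast
  show "\<forall>e\<in>AP n - Eqn n. phi n e = 0"
  proof
    fix e assume "e \<in> AP n - Eqn n"
    then have "e = ({}, {..<n}) \<or> e = ({..<n}, {})" using Eqn_AP by blast
    then show "phi n e = 0" by (auto simp: phi_def)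
  qed
qed

lemma phi_dec:
  assumes f: "f \<in> DD n"
  shows "phi n (dec n f) = card {i\<in>{..<n}. f i = 2} * fact (n - 1)
     + card {i\<in>{..<n}. f i = 0} * card {i\<in>{..<n}. f i = 1} * fact (n - 2)"
proof -
  have fi: "f i \<in> {0,1,2}" if "i \<in> {..<n}" for i using PiE_mem[OF f[unfolded DD_def] that] .
  have "{i\<in>{..<n}. f i \<noteq> 1} \<inter> {i\<in>{..<n}. f i \<noteq> 0} = {i\<in>{..<n}. f i = 2}" using fi by fastforce
  moreover have "{i\<in>{..<n}. f i \<noteq> 1} - {i\<in>{..<n}. f i \<noteq> 0} = {i\<in>{..<n}. f i = 0}" by auto
  moreover have "{i\<in>{..<n}. f i \<noteq> 0} - {i\<in>{..<n}. f i \<noteq> 1} = {i\<in>{..<n}. f i = 1}" by auto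
  ultimately show ?thesis by (simp add: phi_def dec_def)
qed

lemma sum_phi:
  assumes n: "2 \<le> n"
  shows "(\<Sum>e\<in>Eqn n. phi n e) = 4 * fact n * 3 ^ (n - 2)"
proof -
  have "(\<Sum>e\<in>Eqn n. phi n e) = (\<Sum>e\<in>AP n. phi n e)" by (rule sum_Eqn_AP)
  also have "\<dots> = (\<Sum>f\<in>DD n. phi n (dec n f))" by (rule sum.reindex_bij_betw[OF bij_dec, symmetric])
  also have "\<dots> = (\<Sum>f\<in>DD n. card {i\<in>{..<n}. f i = 2} * fact (n - 1)
     + card {i\<in>{..<n}. f i = 0} * card {i\<in>{..<n}. f i = 1} * fact (n - 2))"
    by (rule sum.cong[OF refl]) (rule phi_dec)
  also have "\<dots> = (\<Sum>f\<in>DD n. card {i\<in>{..<n}. f i = 2}) * fact (n - 1)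
     + (\<Sum>f\<in>DD n. card {i\<in>{..<n}. f i = 0} * card {i\<in>{..<n}. f i = 1}) * fact (n - 2)"
    by (simp add: sum.distrib sum_distrib_right)
  also have "\<dots> = n * 3 ^ (n - 1) * fact (n - 1) + n * ((n - 1) * 3 ^ (n - 2)) * fact (n - 2)"
    by (simp only: sum_c2 sum_c01)
  also have "\<dots> = 4 * fact n * 3 ^ (n - 2)"
  proof -
    obtain m where m: "n = m + 2" using n by (metis add.commute le_Suc_ex)
    have "n * 3 ^ (n - 1) * fact (n - 1) = 3 * (3 ^ m * fact n)"
      unfolding m by (simp add: fact_Suc algebra_simps)
    moreover have "n * ((n - 1) * 3 ^ (n - 2)) * fact (n - 2) = 3 ^ m * fact n"
      unfolding m by (simp add: fact_Suc algebra_simps)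
    moreover have "4 * fact n * 3 ^ (n - 2) = 4 * (3 ^ m * (fact n::nat))" unfolding m by simp
    ultimately show ?thesis by simp
  qed
  finally show ?thesis .
qed

lemma card_Eqn:
  assumes "1 \<le> n"
  shows "card (Eqn n) = 3 ^ n - 2"
proof -
  have sub: "{({}, {..<n}), ({..<n}, {})} \<subseteq> AP n" by (auto simp: AP_def)
  have "0 \<in> {..<n}" using assms by simp
  then have ne: "{..<n} \<noteq> ({}::nat set)" by blast
  have "card {({}, {..<n}), ({..<n}::nat set, {}::nat set)} = 2" using ne by simp
  then show ?thesis unfolding Eqn_AP using card_Diff_subset[OF _ sub] card_AP by simp
qed

theorem mainTheorem6:
  fixes n l :: nat
  assumes "2 \<le> n" and "n \<le> l"
  shows "(\<Sum>e\<in>Eqn n. real (Irr l n (Vsys l n {e}))) / real (card (Eqn n))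
           = 4 * fact n * 3 ^ (n - 2) / (3 ^ n - 2)"
proof -
  have n1: "1 \<le> n" using assms by simp
  have "(\<Sum>e\<in>Eqn n. real (Irr l n (Vsys l n {e}))) = (\<Sum>e\<in>Eqn n. real (phi n e))"
  proof (rule sum.cong[OF refl])
    fix e assume e: "e \<in> Eqn n"
    obtain T S where eTS: "e = (T,S)" by (cases e)
    show "real (Irr l n (Vsys l n {e})) = real (phi n e)"
      using comp_Irr[OF e[unfolded eTS] assms] eTS by (simp add: phi_def)
  qed
  also have "\<dots> = real (\<Sum>e\<in>Eqn n. phi n e)" by (rule of_nat_sum[symmetric])
  also have "\<dots> = real (4 * fact n * 3 ^ (n - 2))" using sum_phi[OF assms(1)] by simp
  also have "\<dots> = 4 * fact n * 3 ^ (n - 2)" by (simp add: of_nat_fact)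
  finally have num: "(\<Sum>e\<in>Eqn n. real (Irr l n (Vsys l n {e}))) = 4 * fact n * 3 ^ (n - 2)" .
  have "(2::nat) \<le> 3 ^ n"
  proof -
    have "(3::nat) ^ 1 \<le> 3 ^ n" using n1 by (intro power_increasing) auto
    then show ?thesis by simp
  qed
  then have den: "real (card (Eqn n)) = 3 ^ n - 2"
    using card_Eqn[OF n1] by (simp add: of_nat_diff)
  show ?thesis using num den by simp
qed

end
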